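(* A reflexive oriented graph $D$ is transitive if and only if $G=\mathrm{Split}(D)$ is WDI. Furthermore, if $G$ is WDI, then the perfect matching $M=\{\mathrm{out}(v)\to\mathrm{in}(v)\mid v\in V(D)\}$ is exactly the set of disimplicial arcs of $G$.
   Context: A digraph is a finite vertex set $V$ with arc set $E\subseteq V\times V$ (loops allowed). $D$ is reflexive if $v\to v\in E$ for all $v$; oriented if $v\to w$ and $w\to v$ are both arcs only when $v=w$; a vertex $v$ is transitive if $x\to y$ is an arc for every in-neighbor $x$ and out-neighbor $y$ of $v$, and $D$ is transitive if all vertices are. Source: no in-neighbors; sink: no out-neighbors. $\mathrm{Split}(D)$ has a vertex $\mathrm{out}(v)$ for each non-sink $v$ and a vertex $\mathrm{in}(w)$ for each non-source $w$ (all distinct), with $\mathrm{out}(v)\to\mathrm{in}(w)$ an arc iff $v\to w\in E(D)$, no other arcs. A diclique is a pair $(V,W)$ of nonempty vertex sets, written $V\to W$, with $v\to w$ an arc for all $v\in V$, $w\in W$; an arc $v\to w$ belongs to it if $v\in V$, $w\in W$. It is maximal if it is not properly contained (componentwise) in another diclique. An arc $v\to w$ is disimplicial if $x\to y$ is an arc for all in-neighbors $x$ of $w$ and out-neighbors $y$ of $v$. A reduced diclique is a maximal diclique containing a disimplicial arc. A digraph is weakly diclique irreducible (WDI) if every arc belongs to some reduced diclique. *)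

theory Defs
  imports Main
begin

definition digraph :: "'a set \<Rightarrow> ('a \<times> 'a) set \<Rightarrow> bool" where
  "digraph V E \<longleftrightarrow> finite V \<and> E \<subseteq> V \<times> V"

definition reflexive_dg :: "'a set \<Rightarrow> ('a \<times> 'a) set \<Rightarrow> bool" where
  "reflexive_dg V E \<longleftrightarrow> (\<forall>v\<in>V. (v, v) \<in> E)"

definition oriented_dg :: "('a \<times> 'a) set \<Rightarrow> bool" where
  "oriented_dg E \<longleftrightarrow> (\<forall>v w. (v, w) \<in> E \<and> (w, v) \<in> E \<longrightarrow> v = w)"

definition transitive_vertex :: "('a \<times> 'a) set \<Rightarrow> 'a \<Rightarrow> bool" where
  "transitive_vertex E v \<longleftrightarrow> (\<forall>x y. (x, v) \<in> E \<and> (v, y) \<in> E \<longrightarrow> (x, y) \<in> E)"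

definition transitive_dg :: "'a set \<Rightarrow> ('a \<times> 'a) set \<Rightarrow> bool" where
  "transitive_dg V E \<longleftrightarrow> (\<forall>v\<in>V. transitive_vertex E v)"

definition is_source :: "('a \<times> 'a) set \<Rightarrow> 'a \<Rightarrow> bool" where
  "is_source E v \<longleftrightarrow> (\<forall>x. (x, v) \<notin> E)"

definition is_sink :: "('a \<times> 'a) set \<Rightarrow> 'a \<Rightarrow> bool" where
  "is_sink E v \<longleftrightarrow> (\<forall>y. (v, y) \<notin> E)"

text \<open>Split(D): out(v) is rendered as Inl v, in(w) as Inr w.\<close>

definition split_V :: "'a set \<Rightarrow> ('a \<times> 'a) set \<Rightarrow> ('a + 'a) set" where
  "split_V V E = {Inl v |v. v \<in> V \<and> \<not> is_sink E v} \<union> {Inr w |w. w \<in> V \<and> \<not> is_source E w}"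

definition split_E :: "('a \<times> 'a) set \<Rightarrow> (('a + 'a) \<times> ('a + 'a)) set" where
  "split_E E = {(Inl v, Inr w) |v w. (v, w) \<in> E}"

definition diclique :: "'b set \<Rightarrow> ('b \<times> 'b) set \<Rightarrow> 'b set \<Rightarrow> 'b set \<Rightarrow> bool" where
  "diclique V E A B \<longleftrightarrow> A \<noteq> {} \<and> B \<noteq> {} \<and> A \<subseteq> V \<and> B \<subseteq> V \<and> (\<forall>a\<in>A. \<forall>b\<in>B. (a, b) \<in> E)"

definition maximal_diclique :: "'b set \<Rightarrow> ('b \<times> 'b) set \<Rightarrow> 'b set \<Rightarrow> 'b set \<Rightarrow> bool" where
  "maximal_diclique V E A B \<longleftrightarrow> diclique V E A B \<and>
     (\<forall>A' B'. diclique V E A' B' \<and> A \<subseteq> A' \<and> B \<subseteq> B' \<longrightarrow> A' = A \<and> B' = B)"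

definition disimplicial_arc :: "('b \<times> 'b) set \<Rightarrow> 'b \<Rightarrow> 'b \<Rightarrow> bool" where
  "disimplicial_arc E v w \<longleftrightarrow> (v, w) \<in> E \<and>
     (\<forall>x y. (x, w) \<in> E \<and> (v, y) \<in> E \<longrightarrow> (x, y) \<in> E)"

definition reduced_diclique :: "'b set \<Rightarrow> ('b \<times> 'b) set \<Rightarrow> 'b set \<Rightarrow> 'b set \<Rightarrow> bool" where
  "reduced_diclique V E A B \<longleftrightarrow> maximal_diclique V E A B \<and>
     (\<exists>v\<in>A. \<exists>w\<in>B. disimplicial_arc E v w)"

definition WDI :: "'b set \<Rightarrow> ('b \<times> 'b) set \<Rightarrow> bool" where
  "WDI V E \<longleftrightarrow> (\<forall>(v, w)\<in>E. \<exists>A B. reduced_diclique V E A B \<and> v \<in> A \<and> w \<in> B)"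

end

theory Submission
  imports Defs
begin

lemma sE: "(p, q) \<in> split_E E \<longleftrightarrow> (\<exists>a b. p = Inl a \<and> q = Inr b \<and> (a, b) \<in> E)"
  unfolding split_E_def by auto

lemma sE2[simp]: "(Inl a, Inr b) \<in> split_E E \<longleftrightarrow> (a, b) \<in> E"
  unfolding split_E_def by auto

lemma dis_iff:
  "disimplicial_arc (split_E E) (Inl a) (Inr b) \<longleftrightarrow>
     (a, b) \<in> E \<and> (\<forall>x y. (x, b) \<in> E \<and> (a, y) \<in> E \<longrightarrow> (x, y) \<in> E)"
  unfolding disimplicial_arc_def
proof (rule iffI)
  assume "(Inl a, Inr b) \<in> split_E E \<and> (\<forall>x y. (x, Inr b) \<in> split_E E \<and> (Inl a, y) \<in> split_E E \<longrightarrow> (x, y) \<in> split_E E)"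
  then show "(a, b) \<in> E \<and> (\<forall>x y. (x, b) \<in> E \<and> (a, y) \<in> E \<longrightarrow> (x, y) \<in> E)"
    by (metis sE2)
next
  assume h: "(a, b) \<in> E \<and> (\<forall>x y. (x, b) \<in> E \<and> (a, y) \<in> E \<longrightarrow> (x, y) \<in> E)"
  show "(Inl a, Inr b) \<in> split_E E \<and> (\<forall>x y. (x, Inr b) \<in> split_E E \<and> (Inl a, y) \<in> split_E E \<longrightarrow> (x, y) \<in> split_E E)"
  proof (intro conjI allI impI)
    show "(Inl a, Inr b) \<in> split_E E" using h by simp
    fix x y assume "(x, Inr b) \<in> split_E E \<and> (Inl a, y) \<in> split_E E"
    then obtain x' y' where "x = Inl x'" "y = Inr y'" "(x', b) \<in> E" "(a, y') \<in> E"
      unfolding sE by blast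
    then show "(x, y) \<in> split_E E" using h by simp
  qed
qed

lemma dis_eq:
  assumes "E \<subseteq> V \<times> V" "reflexive_dg V E" "oriented_dg E"
    and "disimplicial_arc (split_E E) (Inl a) (Inr b)"
  shows "a = b"
proof -
  have ab: "(a, b) \<in> E" and d: "\<And>x y. (x, b) \<in> E \<Longrightarrow> (a, y) \<in> E \<Longrightarrow> (x, y) \<in> E"
    using assms(4) dis_iff by metis+
  have "(b, b) \<in> E" "(a, a) \<in> E" using ab assms(1,2) unfolding reflexive_dg_def by auto
  then have "(b, a) \<in> E" using d by blast
  with ab assms(3) show ?thesis unfolding oriented_dg_def by blast
qed

theorem theorem13:
  fixes V :: "'a set" and E :: "('a \<times> 'a) set"
  assumes "digraph V E" and "reflexive_dg V E" and "oriented_dg E"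
  shows "(transitive_dg V E \<longleftrightarrow> WDI (split_V V E) (split_E E)) \<and>
         (WDI (split_V V E) (split_E E) \<longrightarrow>
           {(Inl v, Inr v) |v. v \<in> V} =
           {a \<in> split_E E. disimplicial_arc (split_E E) (fst a) (snd a)})"
proof -
  have EV: "E \<subseteq> V \<times> V" using assms(1) unfolding digraph_def by auto
  have refl: "\<And>v. v \<in> V \<Longrightarrow> (v, v) \<in> E" using assms(2) unfolding reflexive_dg_def by auto
  have or: "\<And>v w. (v, w) \<in> E \<Longrightarrow> (w, v) \<in> E \<Longrightarrow> v = w"
    using assms(3) unfolding oriented_dg_def by blast
  have T2W: "WDI (split_V V E) (split_E E)" if tr: "transitive_dg V E"
  proof -
    have trv: "\<And>v x y. v \<in> V \<Longrightarrow> (x, v) \<in> E \<Longrightarrow> (v, y) \<in> E \<Longrightarrow> (x, y) \<in> E"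
      using tr unfolding transitive_dg_def transitive_vertex_def by blast
    show ?thesis unfolding WDI_def
    proof (clarify)
      fix p q assume "(p, q) \<in> split_E E"
      then obtain v w where pq: "p = Inl v" "q = Inr w" "(v, w) \<in> E" by (auto simp: sE)
      have vV: "v \<in> V" using pq EV by auto
      define A :: "('a + 'a) set" where "A = {Inl x | x. (x, v) \<in> E}"
      define B :: "('a + 'a) set" where "B = {Inr y | y. (v, y) \<in> E}"
      have vA: "Inl v \<in> A" using refl vV A_def by auto
      have vB: "Inr v \<in> B" using refl vV B_def by auto
      have wB: "Inr w \<in> B" using pq B_def by auto
      have dq: "diclique (split_V V E) (split_E E) A B"
        unfolding diclique_def
      proof (intro conjI)
        show "A \<noteq> {}" "B \<noteq> {}" using vA vB by auto
        show "A \<subseteq> split_V V E" unfolding A_def split_V_def is_sink_def using EV by blast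
        show "B \<subseteq> split_V V E" unfolding B_def split_V_def is_source_def using EV by blast
        show "\<forall>a\<in>A. \<forall>b\<in>B. (a, b) \<in> split_E E"
          unfolding A_def B_def using trv vV by auto
      qed
      have mx: "maximal_diclique (split_V V E) (split_E E) A B"
        unfolding maximal_diclique_def
      proof (rule conjI[OF dq], intro allI impI)
        fix A' B' assume h: "diclique (split_V V E) (split_E E) A' B' \<and> A \<subseteq> A' \<and> B \<subseteq> B'"
        then have ab: "\<forall>a\<in>A'. \<forall>b\<in>B'. (a, b) \<in> split_E E" unfolding diclique_def by blast
        have "A' \<subseteq> A"
        proof
          fix a assume "a \<in> A'"
          then have "(a, Inr v) \<in> split_E E" using ab vB h by blast
          then show "a \<in> A" unfolding A_def by (auto simp: sE)
        qed
        moreover have "B' \<subseteq> B"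
        proof
          fix b assume "b \<in> B'"
          then have "(Inl v, b) \<in> split_E E" using ab vA h by blast
          then show "b \<in> B" unfolding B_def by (auto simp: sE)
        qed
        ultimately show "A' = A \<and> B' = B" using h by blast
      qed
      have "disimplicial_arc (split_E E) (Inl v) (Inr v)"
        unfolding dis_iff using refl vV trv by blast
      then have "reduced_diclique (split_V V E) (split_E E) A B"
        unfolding reduced_diclique_def using mx vA vB by blast
      then show "\<exists>A B. reduced_diclique (split_V V E) (split_E E) A B \<and> p \<in> A \<and> q \<in> B"
        using vA wB pq by blast
    qed
  qed
  have W2T: "transitive_dg V E" if W: "WDI (split_V V E) (split_E E)"
    unfolding transitive_dg_def transitive_vertex_def
  proof (intro ballI allI impI)
    fix v x y assume vV: "v \<in> V" and xy: "(x, v) \<in> E \<and> (v, y) \<in> E"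
    have "(Inl v, Inr v) \<in> split_E E" using refl vV by simp
    then obtain A B where r: "reduced_diclique (split_V V E) (split_E E) A B"
      and vA: "Inl v \<in> A" and vB: "Inr v \<in> B"
      using W unfolding WDI_def by blast
    obtain a b where ab: "a \<in> A" "b \<in> B" "disimplicial_arc (split_E E) a b"
      using r unfolding reduced_diclique_def by blast
    have all: "\<forall>a\<in>A. \<forall>b\<in>B. (a, b) \<in> split_E E"
      using r unfolding reduced_diclique_def maximal_diclique_def diclique_def by blast
    obtain u u' where uu: "a = Inl u" "b = Inr u'"
    proof -
      have "(a, b) \<in> split_E E" using ab(3) unfolding disimplicial_arc_def by blast
      then show ?thesis using that unfolding sE by blast
    qed
    have "u = u'" using dis_eq[OF EV assms(2,3)] ab(3) uu by blast
    have "(v, u) \<in> E" using all vA ab(2) uu \<open>u = u'\<close> by fastforce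
    moreover have "(u, v) \<in> E" using all vB ab(1) uu by fastforce
    ultimately have "u = v" using or by blast
    then have "disimplicial_arc (split_E E) (Inl v) (Inr v)" using ab(3) uu \<open>u = u'\<close> by simp
    then show "(x, y) \<in> E" using xy unfolding dis_iff by blast
  qed
  have M: "{(Inl v, Inr v) |v. v \<in> V} =
           {a \<in> split_E E. disimplicial_arc (split_E E) (fst a) (snd a)}"
    if tr: "transitive_dg V E"
  proof
    have trv: "\<And>v x y. v \<in> V \<Longrightarrow> (x, v) \<in> E \<Longrightarrow> (v, y) \<in> E \<Longrightarrow> (x, y) \<in> E"
      using tr unfolding transitive_dg_def transitive_vertex_def by blast
    show "{(Inl v, Inr v) |v. v \<in> V} \<subseteq> {a \<in> split_E E. disimplicial_arc (split_E E) (fst a) (snd a)}"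
    proof clarify
      fix v assume "v \<in> V"
      then show "(Inl v, Inr v) \<in> split_E E \<and> disimplicial_arc (split_E E) (fst (Inl v, Inr v)) (snd (Inl v, Inr v))"
        using refl trv unfolding fst_conv snd_conv dis_iff sE2 by blast
    qed
    show "{a \<in> split_E E. disimplicial_arc (split_E E) (fst a) (snd a)} \<subseteq> {(Inl v, Inr v) |v. v \<in> V}"
    proof clarify
      fix p q assume "(p, q) \<in> split_E E" "disimplicial_arc (split_E E) (fst (p, q)) (snd (p, q))"
      then obtain a b where "p = Inl a" "q = Inr b" "(a, b) \<in> E"
        "disimplicial_arc (split_E E) (Inl a) (Inr b)" unfolding sE by force
      moreover then have "a = b" using dis_eq[OF EV assms(2,3)] by blast
      ultimately show "\<exists>v. (p, q) = (Inl v, Inr v) \<and> v \<in> V" using EV by blast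
    qed
  qed
  show ?thesis using T2W W2T M by blast
qed

end
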